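(* If the probabilistic normed space $(\mathbb{R},\nu,\tau,\tau^* )$ (on the real line) is a topological vector space with respect to its strong topology, then it is strongly complete, i.e. every strongly Cauchy sequence in $\mathbb{R}$ strongly converges to a point of $\mathbb{R}$.
   Context: $\Delta^{+}$ is the set of functions $F:[-\infty,+\infty]\to[0,1]$ that are left-continuous on $\mathbb{R}$, nondecreasing, with $F(0)=0$ and $F(+\infty)=1$, ordered pointwise; $\varepsilon_0$ is the d.f. equal to $0$ for $x\le0$ and $1$ for $x>0$. A triangle function is a map $\tau:\Delta^+\times\Delta^+\to\Delta^+$ that is associative, commutative, nondecreasing in each argument, with unit $\varepsilon_0$. A PN space is a quadruple $(V,\nu,\tau,\tau^* )$ with $V$ a real vector space, $\tau\le\tau^*$ continuous triangle functions, and $\nu:V\to\Delta^+$ such that for all $p,q\in V$: (N1) $\nu_p=\varepsilon_0$ iff $p=\theta$; (N2) $\nu_{-p}=\nu_p$; (N3) $\nu_{p+q}\ge\tau(\nu_p,\nu_q)$; (N4) $\nu_p\le\tau^*(\nu_{\lambda p},\nu_{(1-\lambda)p})$ for all $\lambda\in[0,1]$. The strong topology is generated by the neighborhoods $N_p(\lambda)=\{q\in V:\nu_{p-q}(\lambda)>1-\lambda\}$, $\lambda>0$. A sequence $(p_n)$ strongly converges to $p$ if for every $\lambda>0$ there is $N$ with $p_n\in N_p(\lambda)$ for $n\ge N$; it is strongly Cauchy if for every $\lambda>0$ there is $N$ with $\nu_{p_n-p_m}(\lambda)>1-\lambda$ for all $m,n>N$. *)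

theory Defs
  imports "HOL-Analysis.Analysis"
begin

definition Delta_plus :: "(ereal \<Rightarrow> real) set" where
  "Delta_plus = {F. (\<forall>x. 0 \<le> F x \<and> F x \<le> 1)
      \<and> (\<forall>x::real. ((\<lambda>y. F (ereal y)) \<longlongrightarrow> F (ereal x)) (at_left x))
      \<and> mono F \<and> F 0 = 0 \<and> F PInfty = 1}"

definition eps0 :: "ereal \<Rightarrow> real" where
  "eps0 x = (if x \<le> 0 then 0 else 1)"

text \<open>Weak convergence of distance distribution functions (convergence at
  every real point of continuity of the limit); this is convergence in the
  modified Levy metric on Delta_plus.\<close>

definition weak_conv :: "(nat \<Rightarrow> ereal \<Rightarrow> real) \<Rightarrow> (ereal \<Rightarrow> real) \<Rightarrow> bool" where
  "weak_conv Fs F \<longleftrightarrow>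
     (\<forall>x::real. isCont (\<lambda>y. F (ereal y)) x \<longrightarrow> (\<lambda>n. Fs n (ereal x)) \<longlonglongrightarrow> F (ereal x))"

definition triangle_function ::
  "((ereal \<Rightarrow> real) \<Rightarrow> (ereal \<Rightarrow> real) \<Rightarrow> (ereal \<Rightarrow> real)) \<Rightarrow> bool" where
  "triangle_function T \<longleftrightarrow>
     (\<forall>F\<in>Delta_plus. \<forall>G\<in>Delta_plus. T F G \<in> Delta_plus)
   \<and> (\<forall>F\<in>Delta_plus. \<forall>G\<in>Delta_plus. \<forall>H\<in>Delta_plus. T (T F G) H = T F (T G H))
   \<and> (\<forall>F\<in>Delta_plus. \<forall>G\<in>Delta_plus. T F G = T G F)
   \<and> (\<forall>F\<in>Delta_plus. \<forall>F'\<in>Delta_plus. \<forall>G\<in>Delta_plus.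
        F \<le> F' \<longrightarrow> T F G \<le> T F' G)
   \<and> (\<forall>F\<in>Delta_plus. T F eps0 = F)"

definition continuous_triangle_function ::
  "((ereal \<Rightarrow> real) \<Rightarrow> (ereal \<Rightarrow> real) \<Rightarrow> (ereal \<Rightarrow> real)) \<Rightarrow> bool" where
  "continuous_triangle_function T \<longleftrightarrow> triangle_function T \<and>
     (\<forall>Fs Gs F G. (\<forall>n. Fs n \<in> Delta_plus \<and> Gs n \<in> Delta_plus) \<and> F \<in> Delta_plus \<and> G \<in> Delta_plus
        \<and> weak_conv Fs F \<and> weak_conv Gs G \<longrightarrow> weak_conv (\<lambda>n. T (Fs n) (Gs n)) (T F G))"

definition PN_space_real ::
  "(real \<Rightarrow> ereal \<Rightarrow> real) \<Rightarrow> ((ereal \<Rightarrow> real) \<Rightarrow> (ereal \<Rightarrow> real) \<Rightarrow> (ereal \<Rightarrow> real))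
     \<Rightarrow> ((ereal \<Rightarrow> real) \<Rightarrow> (ereal \<Rightarrow> real) \<Rightarrow> (ereal \<Rightarrow> real)) \<Rightarrow> bool" where
  "PN_space_real \<nu> T Ts \<longleftrightarrow>
     continuous_triangle_function T \<and> continuous_triangle_function Ts
   \<and> (\<forall>F\<in>Delta_plus. \<forall>G\<in>Delta_plus. T F G \<le> Ts F G)
   \<and> (\<forall>p. \<nu> p \<in> Delta_plus)
   \<and> (\<forall>p. \<nu> p = eps0 \<longleftrightarrow> p = 0)
   \<and> (\<forall>p. \<nu> (- p) = \<nu> p)
   \<and> (\<forall>p q. \<nu> (p + q) \<ge> T (\<nu> p) (\<nu> q))
   \<and> (\<forall>p. \<forall>l\<in>{0..1}. \<nu> p \<le> Ts (\<nu> (l * p)) (\<nu> ((1 - l) * p)))"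

definition strong_nbhd :: "(real \<Rightarrow> ereal \<Rightarrow> real) \<Rightarrow> real \<Rightarrow> real \<Rightarrow> real set" where
  "strong_nbhd \<nu> p l = {q. \<nu> (p - q) (ereal l) > 1 - l}"

definition strong_open :: "(real \<Rightarrow> ereal \<Rightarrow> real) \<Rightarrow> real set \<Rightarrow> bool" where
  "strong_open \<nu> U \<longleftrightarrow> (\<forall>p\<in>U. \<exists>l>0. strong_nbhd \<nu> p l \<subseteq> U)"

text \<open>The strong topology: the topology whose open sets are those containing a
  strong neighbourhood of each of their points (for a PN space the family of such
  sets is already a topology, so generating is harmless).\<close>

definition strong_topology :: "(real \<Rightarrow> ereal \<Rightarrow> real) \<Rightarrow> real topology" where
  "strong_topology \<nu> = topology_generated_by {U. strong_open \<nu> U}"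

definition strong_TVS :: "(real \<Rightarrow> ereal \<Rightarrow> real) \<Rightarrow> bool" where
  "strong_TVS \<nu> \<longleftrightarrow>
     continuous_map (prod_topology (strong_topology \<nu>) (strong_topology \<nu>)) (strong_topology \<nu>)
        (\<lambda>(x, y). x + y)
   \<and> continuous_map (prod_topology euclideanreal (strong_topology \<nu>)) (strong_topology \<nu>)
        (\<lambda>(a, x). a * x)"

definition strongly_Cauchy :: "(real \<Rightarrow> ereal \<Rightarrow> real) \<Rightarrow> (nat \<Rightarrow> real) \<Rightarrow> bool" where
  "strongly_Cauchy \<nu> s \<longleftrightarrow>
     (\<forall>l>0. \<exists>N. \<forall>m n. m > N \<and> n > N \<longrightarrow> \<nu> (s n - s m) (ereal l) > 1 - l)"

definition strongly_converges :: "(real \<Rightarrow> ereal \<Rightarrow> real) \<Rightarrow> (nat \<Rightarrow> real) \<Rightarrow> real \<Rightarrow> bool" where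
  "strongly_converges \<nu> s p \<longleftrightarrow>
     (\<forall>l>0. \<exists>N. \<forall>n\<ge>N. s n \<in> strong_nbhd \<nu> p l)"

end

theory Submission
  imports Defs
begin

lemma eps0_Delta: "eps0 \<in> Delta_plus"
proof -
  have lc: "((\<lambda>y. eps0 (ereal y)) \<longlongrightarrow> eps0 (ereal x)) (at_left x)" for x :: real
  proof (cases "x \<le> 0")
    case True
    have "eventually (\<lambda>y. eps0 (ereal y) = eps0 (ereal x)) (at_left x)"
      unfolding eventually_at_left_field using True
      by (intro exI[of _ "x - 1"]) (auto simp: eps0_def zero_ereal_def)
    then show ?thesis by (rule tendsto_eventually)
  next
    case False
    have "eventually (\<lambda>y. eps0 (ereal y) = eps0 (ereal x)) (at_left x)"
      unfolding eventually_at_left_field using False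
      by (intro exI[of _ "0"]) (auto simp: eps0_def zero_ereal_def)
    then show ?thesis by (rule tendsto_eventually)
  qed
  have "mono eps0"
    unfolding mono_def eps0_def by auto
  then show ?thesis
    unfolding Delta_plus_def using lc by (auto simp: eps0_def)
qed

lemma conv_eps0:
  assumes D: "\<forall>n. Fs n \<in> Delta_plus"
    and B: "\<forall>n. Fs n (ereal (1 / real (Suc n))) > 1 - 1 / real (Suc n)"
  shows "weak_conv Fs eps0"
  unfolding weak_conv_def
proof (intro allI impI)
  fix x :: real
  show "(\<lambda>n. Fs n (ereal x)) \<longlonglongrightarrow> eps0 (ereal x)"
  proof (cases "x \<le> 0")
    case True
    have "Fs n (ereal x) = 0" for n
    proof -
      have "Fs n \<in> Delta_plus" using D by auto
      then have "0 \<le> Fs n (ereal x)" "mono (Fs n)" "Fs n 0 = 0"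
        unfolding Delta_plus_def by auto
      moreover have "ereal x \<le> 0" using True by (simp add: zero_ereal_def)
      ultimately show ?thesis by (metis antisym monoD)
    qed
    moreover have "eps0 (ereal x) = 0" using True by (simp add: eps0_def zero_ereal_def)
    ultimately show ?thesis by simp
  next
    case False
    then have "eps0 (ereal x) = 1" by (simp add: eps0_def zero_ereal_def)
    moreover
    obtain N where N: "inverse (real (Suc N)) < x"
      using False reals_Archimedean by (metis not_le)
    have ev: "eventually (\<lambda>n. 1 - inverse (real (Suc n)) \<le> Fs n (ereal x)) sequentially"
      unfolding eventually_sequentially
    proof (intro exI allI impI)
      fix n assume "N \<le> n"
      then have "inverse (real (Suc n)) \<le> inverse (real (Suc N))"
        by (simp add: le_imp_inverse_le)
      with N have "ereal (1 / real (Suc n)) \<le> ereal x"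
        by (simp add: inverse_eq_divide)
      moreover have "mono (Fs n)" using D unfolding Delta_plus_def by auto
      ultimately have "Fs n (ereal (1 / real (Suc n))) \<le> Fs n (ereal x)"
        by (simp add: monoD)
      then show "1 - inverse (real (Suc n)) \<le> Fs n (ereal x)"
        using B[rule_format, of n] by (simp add: inverse_eq_divide)
    qed
    have ev2: "eventually (\<lambda>n. Fs n (ereal x) \<le> 1) sequentially"
      using D unfolding Delta_plus_def by auto
    have lim: "(\<lambda>n. 1 - inverse (real (Suc n))) \<longlonglongrightarrow> 1"
      using tendsto_diff[OF tendsto_const LIMSEQ_inverse_real_of_nat, of 1] by simp
    have "(\<lambda>n. Fs n (ereal x)) \<longlonglongrightarrow> 1"
      by (rule tendsto_sandwich[OF ev ev2 lim tendsto_const])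
    ultimately show ?thesis by simp
  qed
qed

lemma L1:
  assumes CT: "continuous_triangle_function T" and l: "l > 0"
  shows "\<exists>m>0. \<forall>F\<in>Delta_plus. \<forall>G\<in>Delta_plus.
           F (ereal m) > 1 - m \<and> G (ereal m) > 1 - m \<longrightarrow> T F G (ereal l) > 1 - l"
proof (rule ccontr)
  assume H: "\<not> ?thesis"
  have "\<forall>n::nat. \<exists>F G. F \<in> Delta_plus \<and> G \<in> Delta_plus \<and>
      F (ereal (1 / real (Suc n))) > 1 - 1 / real (Suc n) \<and>
      G (ereal (1 / real (Suc n))) > 1 - 1 / real (Suc n) \<and> T F G (ereal l) \<le> 1 - l"
  proof
    fix n :: nat
    have "1 / real (Suc n) > 0" by simp
    then show "\<exists>F G. F \<in> Delta_plus \<and> G \<in> Delta_plus \<and>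
      F (ereal (1 / real (Suc n))) > 1 - 1 / real (Suc n) \<and>
      G (ereal (1 / real (Suc n))) > 1 - 1 / real (Suc n) \<and> T F G (ereal l) \<le> 1 - l"
      using H by (meson not_le)
  qed
  then obtain Fs Gs where FG: "\<forall>n. Fs n \<in> Delta_plus \<and> Gs n \<in> Delta_plus \<and>
      Fs n (ereal (1 / real (Suc n))) > 1 - 1 / real (Suc n) \<and>
      Gs n (ereal (1 / real (Suc n))) > 1 - 1 / real (Suc n) \<and> T (Fs n) (Gs n) (ereal l) \<le> 1 - l"
    by metis
  have wF: "weak_conv Fs eps0" using FG by (intro conv_eps0) auto
  have wG: "weak_conv Gs eps0" using FG by (intro conv_eps0) auto
  have tf: "triangle_function T" using CT unfolding continuous_triangle_function_def by auto
  have unit: "T eps0 eps0 = eps0" using tf eps0_Delta unfolding triangle_function_def by auto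
  have "weak_conv (\<lambda>n. T (Fs n) (Gs n)) (T eps0 eps0)"
    using CT FG wF wG eps0_Delta unfolding continuous_triangle_function_def by blast
  then have wc: "weak_conv (\<lambda>n. T (Fs n) (Gs n)) eps0" using unit by simp
  have ev: "eventually (\<lambda>y. eps0 (ereal y) = 1) (nhds l)"
  proof -
    have "eventually (\<lambda>y. y \<in> {0<..}) (nhds l)"
      using eventually_nhds_in_open[OF open_greaterThan[of 0], of l] l by simp
    then show ?thesis
      by (rule eventually_mono) (auto simp: eps0_def zero_ereal_def)
  qed
  have "isCont (\<lambda>y. eps0 (ereal y)) l"
    using isCont_cong[OF ev] by simp
  with wc have "(\<lambda>n. T (Fs n) (Gs n) (ereal l)) \<longlonglongrightarrow> eps0 (ereal l)"
    unfolding weak_conv_def by blast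
  moreover have "eps0 (ereal l) = 1" using l by (simp add: eps0_def zero_ereal_def)
  ultimately have "1 \<le> 1 - l"
    using FG by (intro LIMSEQ_le_const2) auto
  with l show False by simp
qed


lemma nbhd_mono:
  assumes "\<forall>p. \<nu> p \<in> Delta_plus" "a \<le> b"
  shows "strong_nbhd \<nu> p a \<subseteq> strong_nbhd \<nu> p b"
proof
  fix q assume "q \<in> strong_nbhd \<nu> p a"
  then have "\<nu> (p - q) (ereal a) > 1 - a" by (simp add: strong_nbhd_def)
  moreover have "mono (\<nu> (p - q))" using assms unfolding Delta_plus_def by auto
  then have "\<nu> (p - q) (ereal a) \<le> \<nu> (p - q) (ereal b)" using assms by (simp add: monoD)
  ultimately show "q \<in> strong_nbhd \<nu> p b" using assms by (simp add: strong_nbhd_def)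
qed

lemma open_nbhd:
  assumes D: "\<forall>p. \<nu> p \<in> Delta_plus" and U: "openin (strong_topology \<nu>) U"
  shows "p \<in> U \<Longrightarrow> \<exists>l>0. strong_nbhd \<nu> p l \<subseteq> U"
proof -
  have "generate_topology_on {U. strong_open \<nu> U} U"
    using U unfolding strong_topology_def by (simp add: openin_topology_generated_by_iff)
  then show "p \<in> U \<Longrightarrow> \<exists>l>0. strong_nbhd \<nu> p l \<subseteq> U"
  proof (induction arbitrary: p rule: generate_topology_on.induct)
    case Empty
    then show ?case by simp
  next
    case (Int a b)
    then obtain la lb where "la > 0" "strong_nbhd \<nu> p la \<subseteq> a" "lb > 0" "strong_nbhd \<nu> p lb \<subseteq> b"
      by blast
    moreover have "strong_nbhd \<nu> p (min la lb) \<subseteq> strong_nbhd \<nu> p la"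
      "strong_nbhd \<nu> p (min la lb) \<subseteq> strong_nbhd \<nu> p lb"
      using nbhd_mono[OF D] by simp_all
    ultimately show ?case by (intro exI[of _ "min la lb"]) auto
  next
    case (UN K)
    then obtain k where "k \<in> K" "p \<in> k" by blast
    with UN obtain l where "l > 0" "strong_nbhd \<nu> p l \<subseteq> k" by blast
    with \<open>k \<in> K\<close> show ?case by blast
  next
    case (Basis s)
    then show ?case by (auto simp: strong_open_def)
  qed
qed

lemma strong_open_openin: "strong_open \<nu> U \<Longrightarrow> openin (strong_topology \<nu>) U"
  unfolding strong_topology_def by (rule topology_generated_by_Basis) simp

lemma topspace_strong: "topspace (strong_topology \<nu>) = UNIV"
proof -
  have "strong_open \<nu> UNIV" unfolding strong_open_def by (auto intro: exI[of _ 1])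
  then show ?thesis unfolding strong_topology_def by auto
qed

lemma self_in:
  assumes PN: "PN_space_real \<nu> T Ts" and l: "l > 0"
  shows "p \<in> strong_nbhd \<nu> p l"
proof -
  have "\<nu> 0 = eps0" using PN unfolding PN_space_real_def by auto
  then show ?thesis using l by (simp add: strong_nbhd_def eps0_def zero_ereal_def)
qed

lemma interior_nbhd:
  assumes PN: "PN_space_real \<nu> T Ts" and l: "l > 0"
  shows "\<exists>U. strong_open \<nu> U \<and> p \<in> U \<and> U \<subseteq> strong_nbhd \<nu> p l"
proof -
  define U where "U = {q. \<exists>k>0. strong_nbhd \<nu> q k \<subseteq> strong_nbhd \<nu> p l}"
  have CT: "continuous_triangle_function T" and D: "\<forall>p. \<nu> p \<in> Delta_plus"
    and TR: "\<forall>p q. \<nu> (p + q) \<ge> T (\<nu> p) (\<nu> q)"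
    using PN unfolding PN_space_real_def by auto
  have "strong_open \<nu> U"
    unfolding strong_open_def
  proof
    fix q assume "q \<in> U"
    then obtain k where k: "k > 0" "strong_nbhd \<nu> q k \<subseteq> strong_nbhd \<nu> p l"
      unfolding U_def by blast
    obtain m where m: "m > 0" "\<forall>F\<in>Delta_plus. \<forall>G\<in>Delta_plus.
           F (ereal m) > 1 - m \<and> G (ereal m) > 1 - m \<longrightarrow> T F G (ereal k) > 1 - k"
      using L1[OF CT k(1)] by blast
    have "strong_nbhd \<nu> q m \<subseteq> U"
    proof
      fix r assume r: "r \<in> strong_nbhd \<nu> q m"
      have "strong_nbhd \<nu> r m \<subseteq> strong_nbhd \<nu> q k"
      proof
        fix t assume t: "t \<in> strong_nbhd \<nu> r m"
        have "T (\<nu> (q - r)) (\<nu> (r - t)) (ereal k) > 1 - k"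
          using m D r t by (simp add: strong_nbhd_def)
        moreover have "T (\<nu> (q - r)) (\<nu> (r - t)) \<le> \<nu> ((q - r) + (r - t))"
          using TR by blast
        then have "T (\<nu> (q - r)) (\<nu> (r - t)) (ereal k) \<le> \<nu> (q - t) (ereal k)"
          by (simp add: le_fun_def)
        ultimately show "t \<in> strong_nbhd \<nu> q k" by (simp add: strong_nbhd_def)
      qed
      with k m show "r \<in> U" unfolding U_def by blast
    qed
    with m show "\<exists>l>0. strong_nbhd \<nu> q l \<subseteq> U" by blast
  qed
  moreover have "p \<in> U" unfolding U_def using l by blast
  moreover have "U \<subseteq> strong_nbhd \<nu> p l"
    unfolding U_def using self_in[OF PN] by blast
  ultimately show ?thesis by blast
qed

lemma nu_eps0:
  assumes PN: "PN_space_real \<nu> T Ts" and H: "\<forall>l>0. \<nu> c (ereal l) > 1 - l"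
  shows "c = 0"
proof -
  have D: "\<nu> c \<in> Delta_plus" and E: "\<nu> c = eps0 \<longleftrightarrow> c = 0"
    using PN unfolding PN_space_real_def by auto
  then have bnd: "0 \<le> \<nu> c x" "\<nu> c x \<le> 1" and mo: "mono (\<nu> c)" and z: "\<nu> c 0 = 0"
    and inf: "\<nu> c PInfty = 1" for x
    unfolding Delta_plus_def by auto
  have "\<nu> c x = eps0 x" for x
  proof (cases x)
    case (real r)
    show ?thesis
    proof (cases "r \<le> 0")
      case True
      then have "\<nu> c x \<le> \<nu> c 0" using mo real by (simp add: monoD zero_ereal_def)
      then show ?thesis using bnd[of x] z True real by (simp add: eps0_def zero_ereal_def)
    next
      case False
      have "\<nu> c x \<ge> 1"
      proof (rule ccontr)
        assume "\<not> \<nu> c x \<ge> 1"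
        define l where "l = min r (1 - \<nu> c x)"
        have "l > 0" using False \<open>\<not> \<nu> c x \<ge> 1\<close> by (simp add: l_def)
        then have "\<nu> c (ereal l) > 1 - l" using H by blast
        moreover have "\<nu> c (ereal l) \<le> \<nu> c x" using mo real by (simp add: monoD l_def)
        ultimately show False by (simp add: l_def)
      qed
      then show ?thesis using bnd[of x] False real by (simp add: eps0_def zero_ereal_def)
    qed
  next
    case PInf
    then show ?thesis using inf by (simp add: eps0_def)
  next
    case MInf
    then have "\<nu> c x \<le> \<nu> c 0" using mo by (simp add: monoD)
    then show ?thesis using bnd[of x] z MInf by (simp add: eps0_def)
  qed
  then show ?thesis using E by auto
qed


lemma nbhd0: "PN_space_real \<nu> T Ts \<Longrightarrow> x \<in> strong_nbhd \<nu> 0 l \<longleftrightarrow> \<nu> x (ereal l) > 1 - l"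
proof -
  assume "PN_space_real \<nu> T Ts"
  then have "\<nu> (- x) = \<nu> x" unfolding PN_space_real_def by blast
  then show ?thesis unfolding strong_nbhd_def by simp
qed

lemma lemB:
  assumes PN: "PN_space_real \<nu> T Ts" and TVS: "strong_TVS \<nu>" and l: "l > 0"
  shows "\<exists>d>0. \<forall>x. \<bar>x\<bar> < d \<longrightarrow> \<nu> x (ereal l) > 1 - l"
proof -
  obtain V where V: "strong_open \<nu> V" "0 \<in> V" "V \<subseteq> strong_nbhd \<nu> 0 l"
    using interior_nbhd[OF PN l] by blast
  have g: "continuous_map (prod_topology euclideanreal (strong_topology \<nu>)) (strong_topology \<nu>)
        (\<lambda>(a, x). a * x)" using TVS unfolding strong_TVS_def by auto
  have h: "continuous_map euclideanreal (prod_topology euclideanreal (strong_topology \<nu>)) (\<lambda>a. (a, 1::real))"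
    by (simp add: continuous_map_paired topspace_strong)
  have "continuous_map euclideanreal (strong_topology \<nu>) ((\<lambda>(a, x). a * x) \<circ> (\<lambda>a. (a, 1::real)))"
    by (rule continuous_map_compose[OF h g])
  moreover have "((\<lambda>(a, x). a * x) \<circ> (\<lambda>a. (a, 1::real))) = (\<lambda>a. a)" by auto
  ultimately have cm: "continuous_map euclideanreal (strong_topology \<nu>) (\<lambda>a. a)" by simp
  have "openin euclideanreal {a \<in> topspace euclideanreal. a \<in> V}"
    using openin_continuous_map_preimage[OF cm strong_open_openin[OF V(1)]] .
  then have "open V" by simp
  then obtain d where d: "d > 0" "ball 0 d \<subseteq> V" using V(2) open_contains_ball by blast
  show ?thesis
  proof (intro exI[of _ d] conjI allI impI)
    fix x :: real assume "\<bar>x\<bar> < d"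
    then have "x \<in> V" using d by (auto simp: dist_real_def)
    then show "\<nu> x (ereal l) > 1 - l" using V(3) nbhd0[OF PN] by blast
  qed (use d in auto)
qed

lemma lemA:
  assumes PN: "PN_space_real \<nu> T Ts" and TVS: "strong_TVS \<nu>" and e: "e > 0"
  shows "\<exists>l>0. \<forall>x. \<nu> x (ereal l) > 1 - l \<longrightarrow> \<bar>x\<bar> < e"
proof (rule ccontr)
  assume H: "\<not> ?thesis"
  have "\<not> (\<forall>l>0. \<nu> 1 (ereal l) > 1 - l)" using nu_eps0[OF PN, of 1] by auto
  then obtain l1 where l1: "l1 > 0" "\<nu> 1 (ereal l1) \<le> 1 - l1" by (meson not_le)
  obtain V where V: "strong_open \<nu> V" "0 \<in> V" "V \<subseteq> strong_nbhd \<nu> 0 l1"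
    using interior_nbhd[OF PN l1(1)] by blast
  have "1 \<notin> V"
  proof
    assume "1 \<in> V"
    then have "1 \<in> strong_nbhd \<nu> 0 l1" using V(3) by blast
    then show False using nbhd0[OF PN] l1(2) by simp
  qed
  have g: "continuous_map (prod_topology euclideanreal (strong_topology \<nu>)) (strong_topology \<nu>)
        (\<lambda>(a, x). a * x)" using TVS unfolding strong_TVS_def by auto
  define W where "W = {z \<in> topspace (prod_topology euclideanreal (strong_topology \<nu>)). (\<lambda>(a, x). a * x) z \<in> V}"
  have W: "openin (prod_topology euclideanreal (strong_topology \<nu>)) W"
    unfolding W_def using openin_continuous_map_preimage[OF g strong_open_openin[OF V(1)]] .
  have C: "compactin euclideanreal {-1/e..1/e}" by (simp add: compactin_euclidean_iff)
  have "{-1/e..1/e} \<times> {0} \<subseteq> W" using V(2) by (simp add: W_def topspace_strong subset_iff)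
  then obtain U V' where UV: "openin (strong_topology \<nu>) V'" "0 \<in> V'" "{-1/e..1/e} \<subseteq> U" "U \<times> V' \<subseteq> W"
    using tube_lemma_left[OF W C, of 0] by (auto simp: topspace_strong)
  obtain l where l: "l > 0" "strong_nbhd \<nu> 0 l \<subseteq> V'"
    using open_nbhd[of \<nu> V' 0] UV(1,2) PN unfolding PN_space_real_def by blast
  obtain x where x: "\<nu> x (ereal l) > 1 - l" "\<bar>x\<bar> \<ge> e" using H l(1) by (meson not_le)
  have "x \<in> V'" using l x nbhd0[OF PN] by blast
  have "x \<noteq> 0" using x e by auto
  have "\<bar>1/x\<bar> \<le> 1/e" using x e by (simp add: divide_simps)
  then have "\<bar>1/x\<bar> \<le> 1/e" by simp
  then have "1/x \<in> {-1/e..1/e}" unfolding atLeastAtMost_iff by linarith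
  then have "1/x \<in> U" using UV(3) by blast
  then have "(1/x, x) \<in> W" using \<open>x \<in> V'\<close> UV(4) by blast
  then have "1 \<in> V" using \<open>x \<noteq> 0\<close> by (simp add: W_def)
  with \<open>1 \<notin> V\<close> show False by simp
qed

theorem theorem14:
  fixes \<nu> :: "real \<Rightarrow> ereal \<Rightarrow> real"
    and T Ts :: "(ereal \<Rightarrow> real) \<Rightarrow> (ereal \<Rightarrow> real) \<Rightarrow> (ereal \<Rightarrow> real)"
  assumes "PN_space_real \<nu> T Ts"
    and "strong_TVS \<nu>"
  shows "\<forall>s. strongly_Cauchy \<nu> s \<longrightarrow> (\<exists>p. strongly_converges \<nu> s p)"
proof (intro allI impI)
  fix s assume sC: "strongly_Cauchy \<nu> s"
  have "Cauchy s"
    unfolding Cauchy_def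
  proof (intro allI impI)
    fix e :: real assume "e > 0"
    then obtain l where l: "l > 0" "\<forall>x. \<nu> x (ereal l) > 1 - l \<longrightarrow> \<bar>x\<bar> < e"
      using lemA[OF assms] by blast
    then obtain N where N: "\<forall>m n. m > N \<and> n > N \<longrightarrow> \<nu> (s n - s m) (ereal l) > 1 - l"
      using sC unfolding strongly_Cauchy_def by blast
    show "\<exists>M. \<forall>m\<ge>M. \<forall>n\<ge>M. dist (s m) (s n) < e"
    proof (intro exI[of _ "Suc N"] allI impI)
      fix m n assume "Suc N \<le> m" "Suc N \<le> n"
      then have "\<nu> (s m - s n) (ereal l) > 1 - l" using N by auto
      then show "dist (s m) (s n) < e" using l by (simp add: dist_real_def)
    qed
  qed
  then obtain p where p: "s \<longlonglongrightarrow> p" using Cauchy_convergent convergent_def by blast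
  have "strongly_converges \<nu> s p"
    unfolding strongly_converges_def
  proof (intro allI impI)
    fix l :: real assume "l > 0"
    then obtain d where d: "d > 0" "\<forall>x. \<bar>x\<bar> < d \<longrightarrow> \<nu> x (ereal l) > 1 - l"
      using lemB[OF assms] by blast
    obtain N where N: "\<forall>n\<ge>N. norm (s n - p) < d" using LIMSEQ_D[OF p d(1)] by blast
    show "\<exists>N. \<forall>n\<ge>N. s n \<in> strong_nbhd \<nu> p l"
    proof (intro exI[of _ N] allI impI)
      fix n assume "n \<ge> N"
      then have "\<bar>p - s n\<bar> < d" using N by (simp add: abs_minus_commute)
      then show "s n \<in> strong_nbhd \<nu> p l" using d by (simp add: strong_nbhd_def)
    qed
  qed
  then show "\<exists>p. strongly_converges \<nu> s p" by blast
qed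

end
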